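(* The doctrine $\mathrm{Ssb}_{\mathbf{Asm}}:\mathbf{Asm}^{op}\to\mathbf{InfSL}$ of strong subobjects on $\mathbf{Asm}$ is (equivalent to) the elementary quotient completion $\overline{\mathbb P\Gamma}:\mathcal Q_{\mathbb P\Gamma}^{op}\to\mathbf{InfSL}$ of the doctrine $\mathbb P\Gamma:\mathbf{PAsm}^{op}\to\mathbf{InfSL}$; in particular $\mathcal Q_{\mathbb P\Gamma}\simeq\mathbf{Asm}$.
   Context: Write $\varphi_e$ for the $e$-th partial recursive function. An assembly is a pair $(P,T)$ with $P$ a set and $T\subseteq P\times\mathbb N$ a total relation (every $x\in P$ has some $n$ with $x\,T\,n$). A morphism $f:(P,T)\to(P',T')$ is a function $f:P\to P'$ for which some $t\in\mathbb N$ tracks $f$: whenever $x\,T\,n$, $\varphi_t(n)$ is defined and $f(x)\,T'\,\varphi_t(n)$. These form the category $\mathbf{Asm}$. An assembly is partitioned if $T$ is a function $P\to\mathbb N$; $\mathbf{PAsm}$ is the full subcategory of partitioned assemblies. A strong subobject of $(P,T)$ in $\mathbf{Asm}$ is (up to iso) an inclusion $(X,T\cap(X\times\mathbb N))\hookrightarrow(P,T)$ for a subset $X\subseteq P$; $\mathrm{Ssb}_{\mathbf{Asm}}$ sends an assembly to its poset of strong subobjects, reindexing by pullback. $\mathbb P\Gamma:\mathbf{PAsm}^{op}\to\mathbf{InfSL}$ sends $(P,T)$ to the powerset of $P$ and an arrow $f$ to inverse image along $f$; its equality predicate on $A$ is the diagonal subset. Elementary doctrines: for $\mathcal C$ with finite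 products, an elementary doctrine is a functor $P:\mathcal C^{op}\to\mathbf{InfSL}$ (write $P_f$ for $P(f)$) such that for every object $A$ there is $\delta_A\in P(A\times A)$ with the property that for every $X$ the map $\alpha\mapsto P_{\langle pr_1,pr_2\rangle}(\alpha)\wedge P_{\langle pr_2,pr_3\rangle}(\delta_A)$, $P(X\times A)\to P(X\times A\times A)$, is left adjoint to $P_{\langle pr_1,pr_2,pr_2\rangle}$. We write $a:A\mid\phi\vdash\psi$ for $\phi\le\psi$ in $P(A)$ and $a=_Aa'$ for $\delta_A$. A $P$-equivalence relation on $A$ is $\rho\in P(A\times A)$ that is reflexive ($a=_Aa'\vdash\rho(a,a')$), symmetric and transitive. The elementary quotient completion $\overline P:\mathcal Q_P^{op}\to\mathbf{InfSL}$ has as objects pairs $(A,\rho)$ with $\rho$ a $P$-equivalence relation on $A$; an arrow $(A,\rho)\to(B,\sigma)$ is an equivalence class of arrows $f:A\to B$ of $\mathcal C$ with $\rho(a,a')\vdash\sigma(f(a),f(a'))$, where $f\sim g$ iff $\rho(a,a')\vdash\sigma(f(a),g(a'))$; composition is on representatives; $\overline P(A,\rho)$ is the sub-poset of $P(A)$ of those $\alpha$ with $\alpha(a)\wedge\rho(a,a')\vdash\alpha(a')$, with reindexing as in $P$. *)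

theory Defs
  imports Main "HOL-Library.Countable"
begin

datatype recf = Zero | Succ | Proj nat | Comp recf "recf list" | Prim recf recf | Mu recf

instance recf :: countable by countable_datatype

inductive evalr :: "recf \<Rightarrow> nat list \<Rightarrow> nat \<Rightarrow> bool" where
  ev_zero: "evalr Zero xs 0"
| ev_succ: "evalr Succ (x # xs) (Suc x)"
| ev_proj: "i < length xs \<Longrightarrow> evalr (Proj i) xs (xs ! i)"
| ev_comp: "length ys = length gs \<Longrightarrow> (\<forall>i < length gs. evalr (gs ! i) xs (ys ! i))
            \<Longrightarrow> evalr f ys z \<Longrightarrow> evalr (Comp f gs) xs z"
| ev_prim0: "evalr f xs y \<Longrightarrow> evalr (Prim f g) (0 # xs) y"
| ev_primS: "evalr (Prim f g) (n # xs) y \<Longrightarrow> evalr g (n # y # xs) z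
            \<Longrightarrow> evalr (Prim f g) (Suc n # xs) z"
| ev_mu: "evalr f (n # xs) 0 \<Longrightarrow> (\<forall>m < n. \<exists>k. evalr f (m # xs) (Suc k))
            \<Longrightarrow> evalr (Mu f) xs n"

definition phi :: "nat \<Rightarrow> nat \<Rightarrow> nat option" where
  "phi e n = (if \<exists>m. evalr (from_nat e) [n] m then Some (THE m. evalr (from_nat e) [n] m) else None)"

type_synonym 'a asm = "'a set \<times> ('a \<times> nat) set"

definition is_asm :: "'a asm \<Rightarrow> bool" where
  "is_asm A \<longleftrightarrow> snd A \<subseteq> fst A \<times> UNIV \<and> (\<forall>x\<in>fst A. \<exists>n. (x, n) \<in> snd A)"

definition tracks :: "'a asm \<Rightarrow> 'b asm \<Rightarrow> ('a \<Rightarrow> 'b) \<Rightarrow> nat \<Rightarrow> bool" where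
  "tracks A B f t \<longleftrightarrow> (\<forall>x n. (x, n) \<in> snd A \<longrightarrow> (\<exists>m. phi t n = Some m \<and> (f x, m) \<in> snd B))"

definition asm_hom :: "'a asm \<Rightarrow> 'b asm \<Rightarrow> ('a \<Rightarrow> 'b) \<Rightarrow> bool" where
  "asm_hom A B f \<longleftrightarrow> (\<forall>x\<in>fst A. f x \<in> fst B) \<and> (\<exists>t. tracks A B f t)"

text \<open>Equality of morphisms out of A (functions matter only on the carrier).\<close>
definition hom_eq :: "'a asm \<Rightarrow> ('a \<Rightarrow> 'b) \<Rightarrow> ('a \<Rightarrow> 'b) \<Rightarrow> bool" where
  "hom_eq A f g \<longleftrightarrow> (\<forall>x\<in>fst A. f x = g x)"

definition is_pasm :: "'a asm \<Rightarrow> bool" where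
  "is_pasm A \<longleftrightarrow> is_asm A \<and> (\<forall>x\<in>fst A. \<exists>!n. (x, n) \<in> snd A)"

definition Ssb :: "'a asm \<Rightarrow> 'a set set" where
  "Ssb A = Pow (fst A)"

definition Ssb_reindex :: "'a asm \<Rightarrow> ('a \<Rightarrow> 'b) \<Rightarrow> 'b set \<Rightarrow> 'a set" where
  "Ssb_reindex A f \<beta> = {x \<in> fst A. f x \<in> \<beta>}"

definition PG :: "'a asm \<Rightarrow> 'a set set" where
  "PG A = Pow (fst A)"

definition PG_reindex :: "'a asm \<Rightarrow> ('a \<Rightarrow> 'b) \<Rightarrow> 'b set \<Rightarrow> 'a set" where
  "PG_reindex A f \<alpha> = {x \<in> fst A. f x \<in> \<alpha>}"

text \<open>P Gamma-equivalence relation on A: an element of PG(A x A) = Pow(P x P) that is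
  reflexive (contains the diagonal), symmetric and transitive.\<close>
definition PG_equiv :: "'a asm \<Rightarrow> ('a \<times> 'a) set \<Rightarrow> bool" where
  "PG_equiv A \<rho> \<longleftrightarrow> \<rho> \<subseteq> fst A \<times> fst A
     \<and> Id_on (fst A) \<subseteq> \<rho>
     \<and> (\<forall>a a'. (a, a') \<in> \<rho> \<longrightarrow> (a', a) \<in> \<rho>)
     \<and> (\<forall>a b c. (a, b) \<in> \<rho> \<and> (b, c) \<in> \<rho> \<longrightarrow> (a, c) \<in> \<rho>)"

type_synonym 'a qobj = "'a asm \<times> ('a \<times> 'a) set"

definition is_Qobj :: "'a qobj \<Rightarrow> bool" where
  "is_Qobj X \<longleftrightarrow> is_pasm (fst X) \<and> PG_equiv (fst X) (snd X)"

text \<open>Representatives of Q-arrows: PAsm morphisms preserving the equivalence relations.\<close>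
definition Q_arrow :: "'a qobj \<Rightarrow> 'b qobj \<Rightarrow> ('a \<Rightarrow> 'b) \<Rightarrow> bool" where
  "Q_arrow X Y f \<longleftrightarrow> asm_hom (fst X) (fst Y) f
     \<and> (\<forall>a a'. (a, a') \<in> snd X \<longrightarrow> (f a, f a') \<in> snd Y)"

definition Q_eq :: "'a qobj \<Rightarrow> 'b qobj \<Rightarrow> ('a \<Rightarrow> 'b) \<Rightarrow> ('a \<Rightarrow> 'b) \<Rightarrow> bool" where
  "Q_eq X Y f g \<longleftrightarrow> (\<forall>a a'. (a, a') \<in> snd X \<longrightarrow> (f a, g a') \<in> snd Y)"

definition Qbar :: "'a qobj \<Rightarrow> 'a set set" where
  "Qbar X = {\<alpha> \<in> PG (fst X). \<forall>a a'. a \<in> \<alpha> \<and> (a, a') \<in> snd X \<longrightarrow> a' \<in> \<alpha>}"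

definition Qbar_reindex :: "'a qobj \<Rightarrow> ('a \<Rightarrow> 'b) \<Rightarrow> 'b set \<Rightarrow> 'a set" where
  "Qbar_reindex X f \<alpha> = PG_reindex (fst X) f \<alpha>"

end

theory Submission
  imports Defs
begin

unbundle cardinal_syntax
lemma inj_pair: assumes "infinite (UNIV::'a set)" shows "\<exists>e::'a\<times>nat\<Rightarrow>'a. inj e"
proof -
  have "|UNIV::nat set| \<le>o |UNIV::'a set|" using assms infinite_iff_card_of_nat by blast
  hence "|(UNIV::'a set) \<times> (UNIV::nat set)| =o |UNIV::'a set|"
    using card_of_Times_infinite[of "UNIV::'a set" "UNIV::nat set"] assms by auto
  hence "|(UNIV::'a set) \<times> (UNIV::nat set)| \<le>o |UNIV::'a set|" using ordIso_iff_ordLeq by blast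
  hence "\<exists>f::'a\<times>nat\<Rightarrow>'a. inj_on f ((UNIV::'a set) \<times> (UNIV::nat set)) \<and> f ` ((UNIV::'a set) \<times> (UNIV::nat set)) \<subseteq> (UNIV::'a set)"
    unfolding card_of_ordLeq[symmetric] .
  then obtain f :: "'a\<times>nat\<Rightarrow>'a" where "inj_on f ((UNIV::'a set) \<times> (UNIV::nat set))" by blast
  hence "inj f" by simp
  thus ?thesis by blast
qed
lemma id_code: "\<exists>t. \<forall>n. phi t n = Some n"
proof
  show "\<forall>n. phi (to_nat (Proj 0)) n = Some n"
  proof
    fix n
    have u: "evalr (Proj 0) [n] m \<longleftrightarrow> m = n" for m
      proof
      assume "evalr (Proj 0) [n] m" thus "m = n" by (cases rule: evalr.cases) simp_all
    next
      assume "m = n" thus "evalr (Proj 0) [n] m" using ev_proj[of 0 "[n]"] by simp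
    qed
    show "phi (to_nat (Proj 0)) n = Some n" unfolding phi_def using u by auto
  qed
qed
definition rep :: "'a qobj \<Rightarrow> 'a \<Rightarrow> 'a" where
  "rep X a = (SOME a'. (a, a') \<in> snd X)"

definition FF0 :: "'a qobj \<Rightarrow> 'a asm" where
  "FF0 X = (rep X ` fst (fst X), {(rep X a, n) | a n. (a, n) \<in> snd (fst X)})"

definition FF1 :: "'a qobj \<Rightarrow> 'a qobj \<Rightarrow> ('a \<Rightarrow> 'a) \<Rightarrow> ('a \<Rightarrow> 'a)" where
  "FF1 X Y f = (\<lambda>x. rep Y (f x))"

lemma Q_simps:
  assumes "is_Qobj X"
  shows "snd X \<subseteq> fst (fst X) \<times> fst (fst X)"
    and "\<And>a. a \<in> fst (fst X) \<Longrightarrow> (a, a) \<in> snd X"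
    and "\<And>a b. (a, b) \<in> snd X \<Longrightarrow> (b, a) \<in> snd X"
    and "\<And>a b c. (a, b) \<in> snd X \<Longrightarrow> (b, c) \<in> snd X \<Longrightarrow> (a, c) \<in> snd X"
    and "snd (fst X) \<subseteq> fst (fst X) \<times> UNIV"
    and "\<And>a. a \<in> fst (fst X) \<Longrightarrow> \<exists>!n. (a, n) \<in> snd (fst X)"
proof -
  have E: "PG_equiv (fst X) (snd X)" and P: "is_pasm (fst X)" using assms unfolding is_Qobj_def by auto
  show "snd X \<subseteq> fst (fst X) \<times> fst (fst X)" using E unfolding PG_equiv_def by (elim conjE)
  show "\<And>a. a \<in> fst (fst X) \<Longrightarrow> (a, a) \<in> snd X"
  proof -
    fix a assume "a \<in> fst (fst X)"
    hence "(a, a) \<in> Id_on (fst (fst X))" by (rule Id_onI)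
    thus "(a, a) \<in> snd X" using E unfolding PG_equiv_def by (elim conjE) (rule subsetD)
  qed
  show "\<And>a b. (a, b) \<in> snd X \<Longrightarrow> (b, a) \<in> snd X" using E unfolding PG_equiv_def by (elim conjE) blast
  show "\<And>a b c. (a, b) \<in> snd X \<Longrightarrow> (b, c) \<in> snd X \<Longrightarrow> (a, c) \<in> snd X"
    using E unfolding PG_equiv_def by (elim conjE) blast
  show "snd (fst X) \<subseteq> fst (fst X) \<times> UNIV" using P unfolding is_pasm_def is_asm_def by (elim conjE)
  show "\<And>a. a \<in> fst (fst X) \<Longrightarrow> \<exists>!n. (a, n) \<in> snd (fst X)" using P unfolding is_pasm_def by (elim conjE) blast
qed

lemma rep_rel: assumes "is_Qobj X" "a \<in> fst (fst X)" shows "(a, rep X a) \<in> snd X"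
  unfolding rep_def by (rule someI[of _ a]) (rule Q_simps(2)[OF assms])

lemma rep_in: assumes "is_Qobj X" "a \<in> fst (fst X)" shows "rep X a \<in> fst (fst X)"
  using rep_rel[OF assms] Q_simps(1)[OF assms(1)] by blast

lemma rep_eq: assumes "is_Qobj X" "(a, a') \<in> snd X" shows "rep X a = rep X a'"
proof -
  have "(\<lambda>c. (a, c) \<in> snd X) = (\<lambda>c. (a', c) \<in> snd X)"
    using Q_simps(3,4)[OF assms(1)] assms(2) by blast
  thus ?thesis unfolding rep_def by simp
qed

lemma rep_eqD: assumes "is_Qobj X" "a \<in> fst (fst X)" "a' \<in> fst (fst X)" "rep X a = rep X a'"
  shows "(a, a') \<in> snd X"
  using rep_rel[OF assms(1,2)] rep_rel[OF assms(1,3)] assms(4) Q_simps(3,4)[OF assms(1)] by metis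

lemma rep_rep: assumes "is_Qobj X" "a \<in> fst (fst X)" shows "rep X (rep X a) = rep X a"
  using rep_eq[OF assms(1) rep_rel[OF assms]] by simp

lemma QA_in: "Q_arrow X Y f \<Longrightarrow> a \<in> fst (fst X) \<Longrightarrow> f a \<in> fst (fst Y)"
  unfolding Q_arrow_def asm_hom_def by blast

lemma QA_rel: "Q_arrow X Y f \<Longrightarrow> (a, a') \<in> snd X \<Longrightarrow> (f a, f a') \<in> snd Y"
  unfolding Q_arrow_def by blast

lemma F0_asm: "is_Qobj X \<Longrightarrow> is_asm (FF0 X)"
proof -
  assume X: "is_Qobj X"
  have "snd (FF0 X) \<subseteq> fst (FF0 X) \<times> UNIV" using Q_simps(5)[OF X] unfolding FF0_def by auto
  moreover have "\<forall>x\<in>fst (FF0 X). \<exists>n. (x, n) \<in> snd (FF0 X)"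
  proof
    fix x assume "x \<in> fst (FF0 X)"
    then obtain a where a: "a \<in> fst (fst X)" "x = rep X a" unfolding FF0_def by auto
    then obtain n where "(a, n) \<in> snd (fst X)" using Q_simps(6)[OF X a(1)] by blast
    thus "\<exists>n. (x, n) \<in> snd (FF0 X)" using a unfolding FF0_def by auto
  qed
  ultimately show ?thesis unfolding is_asm_def by blast
qed

lemma F0_carrier: "fst (FF0 X) = rep X ` fst (fst X)" by (simp add: FF0_def)
lemma F0_real: "(y, n) \<in> snd (FF0 X) \<longleftrightarrow> (\<exists>a. y = rep X a \<and> (a, n) \<in> snd (fst X))"
  by (auto simp: FF0_def)

lemma F1_hom:
  assumes X: "is_Qobj X" and Y: "is_Qobj Y" and f: "Q_arrow X Y f"
  shows "asm_hom (FF0 X) (FF0 Y) (FF1 X Y f)"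
proof -
  obtain t where t: "tracks (fst X) (fst Y) f t" using f unfolding Q_arrow_def asm_hom_def by blast
  have "tracks (FF0 X) (FF0 Y) (FF1 X Y f) t"
    unfolding tracks_def
  proof (intro allI impI)
    fix y n assume "(y, n) \<in> snd (FF0 X)"
    then obtain a where ya: "y = rep X a" and an: "(a, n) \<in> snd (fst X)" by (auto simp: F0_real)
    have aA: "a \<in> fst (fst X)" using an Q_simps(5)[OF X] by blast
    obtain m where m: "phi t n = Some m" "(f a, m) \<in> snd (fst Y)" using t an unfolding tracks_def by blast
    have e: "rep Y (f a) = rep Y (f (rep X a))"
      using rep_eq[OF Y QA_rel[OF f rep_rel[OF X aA]]] .
    have "FF1 X Y f y = rep Y (f a)" using e ya by (simp add: FF1_def)
    hence "(FF1 X Y f y, m) \<in> snd (FF0 Y)" unfolding F0_real using m(2) by blast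
    thus "\<exists>m. phi t n = Some m \<and> (FF1 X Y f y, m) \<in> snd (FF0 Y)" using m(1) by blast
  qed
  moreover have "\<forall>x\<in>fst (FF0 X). FF1 X Y f x \<in> fst (FF0 Y)"
    using rep_in[OF X] QA_in[OF f] by (auto simp: F0_carrier FF1_def)
  ultimately show ?thesis unfolding asm_hom_def by blast
qed

lemma F1_cong:
  assumes X: "is_Qobj X" and Y: "is_Qobj Y" and "Q_eq X Y f g"
  shows "hom_eq (FF0 X) (FF1 X Y f) (FF1 X Y g)"
  unfolding hom_eq_def F0_carrier FF1_def
proof
  fix x assume "x \<in> rep X ` fst (fst X)"
  then obtain a where "a \<in> fst (fst X)" "x = rep X a" by blast
  hence "(x, x) \<in> snd X" using rep_in[OF X] Q_simps(2)[OF X] by blast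
  hence "(f x, g x) \<in> snd Y" using assms(3) unfolding Q_eq_def by blast
  thus "rep Y (f x) = rep Y (g x)" using rep_eq[OF Y] by blast
qed

lemma F1_id: assumes X: "is_Qobj X" shows "hom_eq (FF0 X) (FF1 X X id) id"
  unfolding hom_eq_def F0_carrier FF1_def using rep_rep[OF X] by auto

lemma F1_comp:
  assumes X: "is_Qobj X" and Y: "is_Qobj Y" and Z: "is_Qobj Z" and f: "Q_arrow X Y f" and g: "Q_arrow Y Z g"
  shows "hom_eq (FF0 X) (FF1 X Z (g \<circ> f)) (FF1 Y Z g \<circ> FF1 X Y f)"
  unfolding hom_eq_def F0_carrier FF1_def
proof
  fix x assume "x \<in> rep X ` fst (fst X)"
  hence xA: "x \<in> fst (fst X)" using rep_in[OF X] by blast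
  have "(f x, rep Y (f x)) \<in> snd Y" using rep_rel[OF Y QA_in[OF f xA]] .
  hence "(g (f x), g (rep Y (f x))) \<in> snd Z" by (rule QA_rel[OF g])
  thus "rep Z ((g \<circ> f) x) = ((\<lambda>x. rep Z (g x)) \<circ> (\<lambda>x. rep Y (f x))) x"
    using rep_eq[OF Z] by simp
qed

lemma F1_faithful:
  assumes X: "is_Qobj X" and Y: "is_Qobj Y" and f: "Q_arrow X Y f" and g: "Q_arrow X Y g"
    and h: "hom_eq (FF0 X) (FF1 X Y f) (FF1 X Y g)"
  shows "Q_eq X Y f g"
  unfolding Q_eq_def
proof (intro allI impI)
  fix a a' assume aa: "(a, a') \<in> snd X"
  have aA: "a \<in> fst (fst X)" using aa Q_simps(1)[OF X] by blast
  let ?r = "rep X a"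
  have rA: "?r \<in> fst (fst X)" using rep_in[OF X aA] .
  have e: "rep Y (f ?r) = rep Y (g ?r)" using h rA aA unfolding hom_eq_def F0_carrier FF1_def by blast
  have 1: "(f a, f ?r) \<in> snd Y" using QA_rel[OF f rep_rel[OF X aA]] .
  have 2: "(f ?r, g ?r) \<in> snd Y" using rep_eqD[OF Y QA_in[OF f rA] QA_in[OF g rA] e] .
  have "(?r, a') \<in> snd X" using rep_rel[OF X aA] aa Q_simps(3,4)[OF X] by blast
  hence 3: "(g ?r, g a') \<in> snd Y" using QA_rel[OF g] by blast
  show "(f a, g a') \<in> snd Y" using 1 2 3 Q_simps(4)[OF Y] by blast
qed

lemma F1_full:
  assumes X: "is_Qobj X" and Y: "is_Qobj Y" and h: "asm_hom (FF0 X) (FF0 Y) h"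
  shows "\<exists>f. Q_arrow X Y f \<and> hom_eq (FF0 X) (FF1 X Y f) h"
proof -
  obtain t where t: "tracks (FF0 X) (FF0 Y) h t" using h unfolding asm_hom_def by blast
  define nr where "nr a = (THE n. (a, n) \<in> snd (fst X))" for a
  have nr: "(a, nr a) \<in> snd (fst X)" if "a \<in> fst (fst X)" for a
    unfolding nr_def using theI'[OF Q_simps(6)[OF X that]] .
  have ex: "\<exists>b. b \<in> fst (fst Y) \<and> rep Y b = h (rep X a) \<and> (b, the (phi t (nr a))) \<in> snd (fst Y)"
    if aA: "a \<in> fst (fst X)" for a
  proof -
    have "(rep X a, nr a) \<in> snd (FF0 X)" using nr[OF aA] by (auto simp: F0_real)
    then obtain m where m: "phi t (nr a) = Some m" "(h (rep X a), m) \<in> snd (FF0 Y)"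
      using t unfolding tracks_def by blast
    then obtain b where b: "h (rep X a) = rep Y b" "(b, m) \<in> snd (fst Y)" by (auto simp: F0_real)
    have "b \<in> fst (fst Y)" using b(2) Q_simps(5)[OF Y] by blast
    thus ?thesis using b m by auto
  qed
  define f where "f a = (SOME b. b \<in> fst (fst Y) \<and> rep Y b = h (rep X a) \<and> (b, the (phi t (nr a))) \<in> snd (fst Y))" for a
  have f: "f a \<in> fst (fst Y) \<and> rep Y (f a) = h (rep X a) \<and> (f a, the (phi t (nr a))) \<in> snd (fst Y)"
    if "a \<in> fst (fst X)" for a
    unfolding f_def using someI_ex[OF ex[OF that]] .
  have tr: "tracks (fst X) (fst Y) f t"
    unfolding tracks_def
  proof (intro allI impI)
    fix a n assume an: "(a, n) \<in> snd (fst X)"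
    have aA: "a \<in> fst (fst X)" using an Q_simps(5)[OF X] by blast
    have "n = nr a" using Q_simps(6)[OF X aA] an nr[OF aA] by blast
    moreover have "(rep X a, nr a) \<in> snd (FF0 X)" using nr[OF aA] by (auto simp: F0_real)
    then obtain m where "phi t (nr a) = Some m" using t unfolding tracks_def by blast
    ultimately show "\<exists>m. phi t n = Some m \<and> (f a, m) \<in> snd (fst Y)" using f[OF aA] by auto
  qed
  have pres: "(f a, f a') \<in> snd Y" if "(a, a') \<in> snd X" for a a'
  proof -
    have A: "a \<in> fst (fst X)" "a' \<in> fst (fst X)" using that Q_simps(1)[OF X] by blast+
    have "rep X a = rep X a'" using rep_eq[OF X that] .
    hence "rep Y (f a) = rep Y (f a')" using f A by simp
    thus ?thesis using rep_eqD[OF Y] f A by blast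
  qed
  have "Q_arrow X Y f" unfolding Q_arrow_def asm_hom_def using f tr pres by blast
  moreover have "hom_eq (FF0 X) (FF1 X Y f) h"
    unfolding hom_eq_def F0_carrier FF1_def
  proof
    fix x assume "x \<in> rep X ` fst (fst X)"
    then obtain a where aA: "a \<in> fst (fst X)" and x: "x = rep X a" by blast
    show "rep Y (f x) = h x" using f[OF rep_in[OF X aA]] rep_rep[OF X aA] x by simp
  qed
  ultimately show ?thesis by blast
qed

lemma bb_iso:
  assumes X: "is_Qobj X"
  shows "bij_betw (\<lambda>\<alpha>. rep X ` \<alpha>) (Qbar X) (Ssb (FF0 X))
        \<and> (\<forall>\<alpha>\<in>Qbar X. \<forall>\<beta>\<in>Qbar X. \<alpha> \<subseteq> \<beta> \<longleftrightarrow> rep X ` \<alpha> \<subseteq> rep X ` \<beta>)"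
proof -
  have sub: "\<alpha> \<subseteq> \<beta>" if a: "\<alpha> \<in> Qbar X" and b: "\<beta> \<in> Qbar X" and s: "rep X ` \<alpha> \<subseteq> rep X ` \<beta>" for \<alpha> \<beta>
  proof
    fix x assume x: "x \<in> \<alpha>"
    have xA: "x \<in> fst (fst X)" using x a by (auto simp: Qbar_def PG_def)
    obtain y where y: "y \<in> \<beta>" "rep X x = rep X y" using s x by blast
    have yA: "y \<in> fst (fst X)" using y b by (auto simp: Qbar_def PG_def)
    have "(y, x) \<in> snd X" using rep_eqD[OF X yA xA] y by simp
    thus "x \<in> \<beta>" using b y by (auto simp: Qbar_def)
  qed
  have ord: "\<forall>\<alpha>\<in>Qbar X. \<forall>\<beta>\<in>Qbar X. \<alpha> \<subseteq> \<beta> \<longleftrightarrow> rep X ` \<alpha> \<subseteq> rep X ` \<beta>"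
    using sub by blast
  have inj: "inj_on (\<lambda>\<alpha>. rep X ` \<alpha>) (Qbar X)"
    unfolding inj_on_def using sub by (metis subset_antisym order_refl)
  have im1: "(\<lambda>\<alpha>. rep X ` \<alpha>) ` Qbar X \<subseteq> Ssb (FF0 X)"
    by (auto simp: Qbar_def PG_def Ssb_def F0_carrier)
  have im2: "Ssb (FF0 X) \<subseteq> (\<lambda>\<alpha>. rep X ` \<alpha>) ` Qbar X"
  proof
    fix S assume "S \<in> Ssb (FF0 X)"
    hence S: "S \<subseteq> rep X ` fst (fst X)" by (simp add: Ssb_def F0_carrier)
    let ?\<alpha> = "{a \<in> fst (fst X). rep X a \<in> S}"
    have "?\<alpha> \<in> Qbar X" unfolding Qbar_def PG_def
    proof (rule CollectI, rule conjI)
      show "?\<alpha> \<in> Pow (fst (fst X))" by blast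
    next
      show "\<forall>a a'. a \<in> ?\<alpha> \<and> (a, a') \<in> snd X \<longrightarrow> a' \<in> ?\<alpha>"
      proof (intro allI impI)
      fix a a' assume h: "a \<in> ?\<alpha> \<and> (a, a') \<in> snd X"
      hence "a' \<in> fst (fst X)" using Q_simps(1)[OF X] by blast
      moreover have "rep X a' = rep X a" using rep_eq[OF X] h by metis
      ultimately show "a' \<in> ?\<alpha>" using h by simp
      qed
    qed
    moreover have "rep X ` ?\<alpha> = S"
    proof
      show "rep X ` ?\<alpha> \<subseteq> S" by blast
      show "S \<subseteq> rep X ` ?\<alpha>"
      proof
        fix s assume s: "s \<in> S"
        then obtain a where aA: "a \<in> fst (fst X)" and sa: "s = rep X a" using S by blast
        have "rep X a \<in> ?\<alpha>" using rep_in[OF X aA] rep_rep[OF X aA] s sa by simp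
        moreover have "s = rep X (rep X a)" using rep_rep[OF X aA] sa by simp
        ultimately show "s \<in> rep X ` ?\<alpha>" by (rule rev_image_eqI)
      qed
    qed
    ultimately show "S \<in> (\<lambda>\<alpha>. rep X ` \<alpha>) ` Qbar X" by blast
  qed
  show ?thesis using inj im1 im2 ord unfolding bij_betw_def by blast
qed

lemma bb_nat:
  assumes X: "is_Qobj X" and Y: "is_Qobj Y" and f: "Q_arrow X Y f" and \<alpha>: "\<alpha> \<in> Qbar Y"
  shows "rep X ` (Qbar_reindex X f \<alpha>) = Ssb_reindex (FF0 X) (FF1 X Y f) (rep Y ` \<alpha>)"
proof -
  have key: "rep Y (f (rep X a)) \<in> rep Y ` \<alpha> \<longleftrightarrow> f a \<in> \<alpha>" if aA: "a \<in> fst (fst X)" for a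
  proof -
    have r: "(f a, f (rep X a)) \<in> snd Y" using QA_rel[OF f rep_rel[OF X aA]] .
    have fA: "f (rep X a) \<in> fst (fst Y)" using QA_in[OF f rep_in[OF X aA]] .
    show ?thesis
    proof
      assume "rep Y (f (rep X a)) \<in> rep Y ` \<alpha>"
      then obtain y where y: "y \<in> \<alpha>" "rep Y (f (rep X a)) = rep Y y" by blast
      have yA: "y \<in> fst (fst Y)" using y \<alpha> by (auto simp: Qbar_def PG_def)
      have "(y, f (rep X a)) \<in> snd Y" using rep_eqD[OF Y yA fA] y by simp
      hence "(y, f a) \<in> snd Y" using r Q_simps(3,4)[OF Y] by blast
      thus "f a \<in> \<alpha>" using y \<alpha> by (auto simp: Qbar_def)
    next
      assume "f a \<in> \<alpha>"
      hence "f (rep X a) \<in> \<alpha>" using r \<alpha> by (auto simp: Qbar_def)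
      thus "rep Y (f (rep X a)) \<in> rep Y ` \<alpha>" by blast
    qed
  qed
  show ?thesis
  proof
    show "rep X ` Qbar_reindex X f \<alpha> \<subseteq> Ssb_reindex (FF0 X) (FF1 X Y f) (rep Y ` \<alpha>)"
      using key unfolding Qbar_reindex_def PG_reindex_def Ssb_reindex_def F0_carrier FF1_def by blast
    show "Ssb_reindex (FF0 X) (FF1 X Y f) (rep Y ` \<alpha>) \<subseteq> rep X ` Qbar_reindex X f \<alpha>"
    proof
      fix x assume "x \<in> Ssb_reindex (FF0 X) (FF1 X Y f) (rep Y ` \<alpha>)"
      then obtain a where aA: "a \<in> fst (fst X)" and x: "x = rep X a" and h: "rep Y (f (rep X a)) \<in> rep Y ` \<alpha>"
        unfolding Ssb_reindex_def F0_carrier FF1_def by blast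
      have "a \<in> Qbar_reindex X f \<alpha>" using key[OF aA] h aA unfolding Qbar_reindex_def PG_reindex_def by blast
      thus "x \<in> rep X ` Qbar_reindex X f \<alpha>" using x by blast
    qed
  qed
qed


lemma ess_surj:
  fixes e :: "'a \<times> nat \<Rightarrow> 'a" and B :: "'a asm"
  assumes e: "inj e" and B: "is_asm B"
  shows "\<exists>(X::'a qobj) k l. is_Qobj X \<and> asm_hom (FF0 X) B k \<and> asm_hom B (FF0 X) l
        \<and> hom_eq (FF0 X) (l \<circ> k) id \<and> hom_eq B (k \<circ> l) id"
proof -
  let ?P = "fst B" and ?T = "snd B"
  have TP: "\<And>x n. (x, n) \<in> ?T \<Longrightarrow> x \<in> ?P" using B unfolding is_asm_def by blast
  have PT: "\<And>x. x \<in> ?P \<Longrightarrow> \<exists>n. (x, n) \<in> ?T" using B unfolding is_asm_def by blast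
  have einj: "\<And>p q. e p = e q \<longleftrightarrow> p = q" using e unfolding inj_def by blast
  define A where "A = e ` ?T"
  define R where "R = {(e p, snd p) | p. p \<in> ?T}"
  define \<rho> where "\<rho> = {(e (x, n), e (x, n')) | x n n'. (x, n) \<in> ?T \<and> (x, n') \<in> ?T}"
  define X where "X = ((A, R), \<rho>)"
  have pasm: "is_pasm (A, R)"
    unfolding is_pasm_def is_asm_def
  proof (intro conjI ballI)
    show "snd (A, R) \<subseteq> fst (A, R) \<times> UNIV" unfolding A_def R_def by auto
  next
    fix a assume "a \<in> fst (A, R)"
    then obtain x n where a: "a = e (x, n)" "(x, n) \<in> ?T" unfolding A_def by auto
    show "\<exists>n. (a, n) \<in> snd (A, R)" using a unfolding R_def by force
  next
    fix a assume "a \<in> fst (A, R)"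
    then obtain x n where a: "a = e (x, n)" "(x, n) \<in> ?T" unfolding A_def by auto
    show "\<exists>!n. (a, n) \<in> snd (A, R)"
    proof
      show "(a, n) \<in> snd (A, R)" using a unfolding R_def by force
    next
      fix m assume "(a, m) \<in> snd (A, R)"
      then obtain p where "a = e p" "m = snd p" "p \<in> ?T" unfolding R_def by auto
      thus "m = n" using a einj by auto
    qed
  qed
  have rhoD: "\<And>x n b. (e (x, n), b) \<in> \<rho> \<Longrightarrow> \<exists>n'. b = e (x, n') \<and> (x, n') \<in> ?T"
    unfolding \<rho>_def using einj by auto
  have equiv: "PG_equiv (A, R) \<rho>"
    unfolding PG_equiv_def
  proof (intro conjI allI impI)
    show "\<rho> \<subseteq> fst (A, R) \<times> fst (A, R)" unfolding \<rho>_def A_def by auto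
    show "Id_on (fst (A, R)) \<subseteq> \<rho>" unfolding \<rho>_def A_def Id_on_def by auto
  next
    fix a a' assume "(a, a') \<in> \<rho>" thus "(a', a) \<in> \<rho>" unfolding \<rho>_def by auto
  next
    fix a b c assume h: "(a, b) \<in> \<rho> \<and> (b, c) \<in> \<rho>"
    then obtain x n n' where 1: "a = e (x, n)" "b = e (x, n')" "(x, n) \<in> ?T" "(x, n') \<in> ?T"
      unfolding \<rho>_def by auto
    then obtain n'' where "c = e (x, n'')" "(x, n'') \<in> ?T" using rhoD h by blast
    thus "(a, c) \<in> \<rho>" using 1 unfolding \<rho>_def by auto
  qed
  have X: "is_Qobj X" unfolding is_Qobj_def X_def using pasm equiv by simp
  have XA: "fst (fst X) = A" "snd (fst X) = R" "snd X = \<rho>" unfolding X_def by simp_all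
  have inA: "(x, n) \<in> ?T \<Longrightarrow> e (x, n) \<in> fst (fst X)" for x n unfolding XA A_def by auto
  have rel: "(x, n) \<in> ?T \<Longrightarrow> (x, n') \<in> ?T \<Longrightarrow> (e (x, n), e (x, n')) \<in> snd X" for x n n'
    unfolding XA \<rho>_def by auto
  have repform: "\<exists>n'. rep X (e (x, n)) = e (x, n') \<and> (x, n') \<in> ?T" if "(x, n) \<in> ?T" for x n
    using rhoD rep_rel[OF X inA[OF that]] unfolding XA by blast
  define k where "k y = fst (inv e y)" for y
  have ke: "k (e (x, n)) = x" for x n unfolding k_def using e by simp
  have krep: "(x, n) \<in> ?T \<Longrightarrow> k (rep X (e (x, n))) = x" for x n using repform ke by metis
  define n0 where "n0 x = (SOME n. (x, n) \<in> ?T)" for x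
  have n0: "x \<in> ?P \<Longrightarrow> (x, n0 x) \<in> ?T" for x unfolding n0_def using PT someI_ex by metis
  define l where "l x = rep X (e (x, n0 x))" for x
  have lrep: "(x, n) \<in> ?T \<Longrightarrow> l x = rep X (e (x, n))" for x n
    unfolding l_def using rep_eq[OF X rel[OF n0[OF TP]]] by metis
  obtain t0 where t0: "\<forall>n. phi t0 n = Some n" using id_code by blast
  have Fc: "fst (FF0 X) = rep X ` e ` ?T" using F0_carrier[of X] unfolding XA A_def .
  have Fr: "(y, n) \<in> snd (FF0 X) \<longleftrightarrow> (\<exists>x. y = rep X (e (x, n)) \<and> (x, n) \<in> ?T)" for y n
    unfolding F0_real XA R_def by force
  have hk: "asm_hom (FF0 X) B k"
    unfolding asm_hom_def
  proof (intro conjI ballI exI)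
    fix y assume "y \<in> fst (FF0 X)"
    then obtain x n where "y = rep X (e (x, n))" "(x, n) \<in> ?T" unfolding Fc by auto
    thus "k y \<in> ?P" using krep TP by metis
  next
    show "tracks (FF0 X) B k t0" unfolding tracks_def
    proof (intro allI impI)
      fix y n assume "(y, n) \<in> snd (FF0 X)"
      then obtain x where "y = rep X (e (x, n))" "(x, n) \<in> ?T" unfolding Fr by auto
      thus "\<exists>m. phi t0 n = Some m \<and> (k y, m) \<in> ?T" using krep t0 by metis
    qed
  qed
  have hl: "asm_hom B (FF0 X) l"
    unfolding asm_hom_def
  proof (intro conjI ballI exI)
    fix x assume "x \<in> ?P"
    thus "l x \<in> fst (FF0 X)" unfolding Fc l_def using n0 by blast
  next
    show "tracks B (FF0 X) l t0" unfolding tracks_def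
    proof (intro allI impI)
      fix x n assume h: "(x, n) \<in> ?T"
      have "(l x, n) \<in> snd (FF0 X)" unfolding Fr using lrep[OF h] h by blast
      thus "\<exists>m. phi t0 n = Some m \<and> (l x, m) \<in> snd (FF0 X)" using t0 by blast
    qed
  qed
  have h1: "hom_eq (FF0 X) (l \<circ> k) id"
    unfolding hom_eq_def
  proof
    fix y assume "y \<in> fst (FF0 X)"
    then obtain x n where y: "y = rep X (e (x, n))" "(x, n) \<in> ?T" unfolding Fc by auto
    show "(l \<circ> k) y = id y" using krep[OF y(2)] lrep[OF y(2)] y(1) by simp
  qed
  have h2: "hom_eq B (k \<circ> l) id"
    unfolding hom_eq_def
  proof
    fix x assume "x \<in> ?P"
    thus "(k \<circ> l) x = id x" using krep n0 unfolding l_def by simp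
  qed
  show ?thesis
    apply (rule exI[of _ X], rule exI[of _ k], rule exI[of _ l])
    using X hk hl h1 h2 by simp
qed

theorem theorem4p3:
  assumes "infinite (UNIV :: 'a set)"
  shows "\<exists>(F0 :: 'a qobj \<Rightarrow> 'a asm) (F1 :: 'a qobj \<Rightarrow> 'a qobj \<Rightarrow> ('a \<Rightarrow> 'a) \<Rightarrow> ('a \<Rightarrow> 'a))
           (b :: 'a qobj \<Rightarrow> 'a set \<Rightarrow> 'a set).
     \<comment> \<open>F is a functor Q_{PGamma} \<rightarrow> Asm\<close>
     (\<forall>X. is_Qobj X \<longrightarrow> is_asm (F0 X))
   \<and> (\<forall>X Y f. is_Qobj X \<and> is_Qobj Y \<and> Q_arrow X Y f \<longrightarrow> asm_hom (F0 X) (F0 Y) (F1 X Y f))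
   \<and> (\<forall>X Y f g. is_Qobj X \<and> is_Qobj Y \<and> Q_arrow X Y f \<and> Q_arrow X Y g \<and> Q_eq X Y f g
        \<longrightarrow> hom_eq (F0 X) (F1 X Y f) (F1 X Y g))
   \<and> (\<forall>X. is_Qobj X \<longrightarrow> hom_eq (F0 X) (F1 X X id) id)
   \<and> (\<forall>X Y Z f g. is_Qobj X \<and> is_Qobj Y \<and> is_Qobj Z \<and> Q_arrow X Y f \<and> Q_arrow Y Z g
        \<longrightarrow> hom_eq (F0 X) (F1 X Z (g \<circ> f)) (F1 Y Z g \<circ> F1 X Y f))
     \<comment> \<open>F is faithful, full and essentially surjective\<close>
   \<and> (\<forall>X Y f g. is_Qobj X \<and> is_Qobj Y \<and> Q_arrow X Y f \<and> Q_arrow X Y g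
        \<and> hom_eq (F0 X) (F1 X Y f) (F1 X Y g) \<longrightarrow> Q_eq X Y f g)
   \<and> (\<forall>X Y h. is_Qobj X \<and> is_Qobj Y \<and> asm_hom (F0 X) (F0 Y) h
        \<longrightarrow> (\<exists>f. Q_arrow X Y f \<and> hom_eq (F0 X) (F1 X Y f) h))
   \<and> (\<forall>B :: 'a asm. is_asm B \<longrightarrow> (\<exists>X k l. is_Qobj X \<and> asm_hom (F0 X) B k \<and> asm_hom B (F0 X) l
        \<and> hom_eq (F0 X) (l \<circ> k) id \<and> hom_eq B (k \<circ> l) id))
     \<comment> \<open>b is a natural isomorphism Qbar(PGamma) \<cong> Ssb \<circ> F\<close>
   \<and> (\<forall>X. is_Qobj X \<longrightarrow> bij_betw (b X) (Qbar X) (Ssb (F0 X))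
        \<and> (\<forall>\<alpha>\<in>Qbar X. \<forall>\<beta>\<in>Qbar X. \<alpha> \<subseteq> \<beta> \<longleftrightarrow> b X \<alpha> \<subseteq> b X \<beta>))
   \<and> (\<forall>X Y f \<alpha>. is_Qobj X \<and> is_Qobj Y \<and> Q_arrow X Y f \<and> \<alpha> \<in> Qbar Y
        \<longrightarrow> b X (Qbar_reindex X f \<alpha>) = Ssb_reindex (F0 X) (F1 X Y f) (b Y \<alpha>))"
  
proof -
  obtain e :: "'a \<times> nat \<Rightarrow> 'a" where e: "inj e" using inj_pair[OF assms] by blast
  show ?thesis
    apply (rule exI[of _ FF0], rule exI[of _ FF1], rule exI[of _ "\<lambda>X \<alpha>. rep X ` \<alpha>"])
    apply (intro conjI allI impI)
    subgoal by (rule F0_asm)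
    subgoal by (elim conjE, rule F1_hom)
    subgoal by (elim conjE, rule F1_cong)
    subgoal by (rule F1_id)
    subgoal by (elim conjE, rule F1_comp)
    subgoal by (elim conjE, rule F1_faithful)
    subgoal by (elim conjE, rule F1_full)
    subgoal by (rule ess_surj[OF e])
    subgoal by (rule bb_iso[THEN conjunct1])
    subgoal by (rule bb_iso[THEN conjunct2])
    subgoal by (elim conjE, rule bb_nat)
    done
qed

end
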